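(* Let $H_m$ and $H_n$ be complex Hadamard matrices of orders $m$ and $n$, and let $H=H_m\otimes H_n$ (of order $mn$). Let $R_1$ be the set of the first $n$ rows of $H$ and $R$ the set of the remaining rows. For $1\le i\le n$ let $C_i$ be the set of the $m$ columns of $H$ with indices $i, n+i, 2n+i,\dots,(m-1)n+i$, and let $M_{1i}$ be the submatrix of $H$ with rows $R_1$ and columns $C_i$. Then $\{C_1,\dots,C_n\}$ is a partition of the columns, $\{R,R_1\}$ is a partition of the rows, and for all $i\neq j$ every column of $M_{1i}$ is orthogonal to every column of $M_{1j}$. Consequently, for every $i$ and every $a\in\mathbb{T}$, the matrix obtained from $H$ by replacing $M_{1i}$ with $aM_{1i}$ is a complex Hadamard matrix (so $H$ admits infinitely many such switchings).
   Context: $\mathbb{T}$ is the set of complex numbers of modulus $1$. A complex Hadamard matrix of order $n$ is an $n\times n$ matrix with all entries in $\mathbb{T}$ and $HH^{\ast}=nI_n$. The Kronecker product is $A\otimes B=[a_{ij}B]$, so the first $n$ rows of $H_m\otimes H_n$ consist of the $m$ blocks $(H_m)_{1j}H_n$ placed side by side. *)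

theory Defs
  imports Complex_Main
begin

text \<open>Matrices of order n are functions nat => nat => complex, indexed from 0 and
  considered only on entries i, j < n.\<close>

definition complex_hadamard :: "nat \<Rightarrow> (nat \<Rightarrow> nat \<Rightarrow> complex) \<Rightarrow> bool" where
  "complex_hadamard n H \<longleftrightarrow>
     (\<forall>i<n. \<forall>j<n. norm (H i j) = 1) \<and>
     (\<forall>i<n. \<forall>k<n. (\<Sum>j<n. H i j * cnj (H k j)) = (if i = k then of_nat n else 0))"

definition kron :: "nat \<Rightarrow> (nat \<Rightarrow> nat \<Rightarrow> complex) \<Rightarrow> (nat \<Rightarrow> nat \<Rightarrow> complex) \<Rightarrow> nat \<Rightarrow> nat \<Rightarrow> complex" where
  "kron n A B p q = A (p div n) (q div n) * B (p mod n) (q mod n)"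

definition col_class :: "nat \<Rightarrow> nat \<Rightarrow> nat \<Rightarrow> nat set" where
  "col_class m n i = {k * n + i | k. k < m}"

definition switch_block :: "nat set \<Rightarrow> nat set \<Rightarrow> complex \<Rightarrow> (nat \<Rightarrow> nat \<Rightarrow> complex) \<Rightarrow> nat \<Rightarrow> nat \<Rightarrow> complex" where
  "switch_block RS CS a H p q = (if p \<in> RS \<and> q \<in> CS then a * H p q else H p q)"

end

theory Submission
  imports Defs "Jordan_Normal_Form.Determinant"
begin

lemma hadamard_cols:
  assumes h: "complex_hadamard n A" and i: "i<n" and j: "j<n"
  shows "(\<Sum>r<n. A r i * cnj (A r j)) = (if i=j then of_nat n else 0)"
proof -
  have n0: "n > 0" using i by simp
  define M where "M = mat n n (\<lambda>(i,j). A i j)"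
  define B where "B = mat n n (\<lambda>(i,j). cnj (A j i) / of_nat n)"
  have MB: "M * B = 1\<^sub>m n"
  proof (rule eq_matI)
    fix p q assume p: "p < dim_row (1\<^sub>m n)" and q: "q < dim_col (1\<^sub>m n)"
    have "(M * B) $$ (p,q) = (\<Sum>k<n. A p k * (cnj (A q k) / of_nat n))"
      using p q by (simp add: M_def B_def scalar_prod_def lessThan_atLeast0)
    also have "\<dots> = (\<Sum>k<n. A p k * cnj (A q k)) / of_nat n"
      by (simp add: sum_divide_distrib)
    also have "\<dots> = 1\<^sub>m n $$ (p,q)" using h p q n0 unfolding complex_hadamard_def by simp
    finally show "(M * B) $$ (p,q) = 1\<^sub>m n $$ (p,q)" .
  qed (auto simp: M_def B_def)
  have BM: "B * M = 1\<^sub>m n"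
    by (rule mat_mult_left_right_inverse[OF _ _ MB]) (auto simp: M_def B_def)
  have "(B * M) $$ (j,i) = (\<Sum>r<n. cnj (A r j) / of_nat n * A r i)"
    using i j by (simp add: M_def B_def scalar_prod_def lessThan_atLeast0)
  also have "\<dots> = (\<Sum>r<n. A r i * cnj (A r j)) / of_nat n"
    by (simp add: sum_divide_distrib mult.commute)
  finally have "(B * M) $$ (j,i) = (\<Sum>r<n. A r i * cnj (A r j)) / of_nat n" .
  moreover have "(B * M) $$ (j,i) = (if i = j then 1 else 0)" using BM i j by auto
  ultimately have "(\<Sum>r<n. A r i * cnj (A r j)) / of_nat n = (if i = j then 1 else 0)" by simp
  then show ?thesis using n0 by (cases "i = j") (auto simp: field_simps)
qed


lemma sum_lessThan_mult:
  fixes f :: "nat \<Rightarrow> 'b::comm_monoid_add"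
  shows "(\<Sum>c<m*n. f c) = (\<Sum>k<m. \<Sum>j<n. f (k*n+j))"
proof (induction m)
  case 0 then show ?case by simp
next
  case (Suc m)
  have "(\<Sum>c<Suc m*n. f c) = (\<Sum>c\<in>{0..<m*n}. f c) + (\<Sum>c\<in>{m*n..<m*n+n}. f c)"
    by (simp add: sum.atLeastLessThan_concat lessThan_atLeast0 add.commute)
  also have "(\<Sum>c\<in>{m*n..<m*n+n}. f c) = (\<Sum>j<n. f (m*n+j))"
    using sum.shift_bounds_nat_ivl[of f 0 "m*n" n]
    by (simp add: lessThan_atLeast0 add.commute)
  finally show ?case using Suc by (simp add: lessThan_atLeast0)
qed

lemma sum_col_class:
  fixes g :: "nat \<Rightarrow> 'b::comm_monoid_add"
  assumes "0 < n"
  shows "(\<Sum>c\<in>col_class m n i. g c) = (\<Sum>k<m. g (k*n+i))"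
proof -
  have "col_class m n i = (\<lambda>k. k*n+i) ` {..<m}" by (auto simp: col_class_def)
  moreover have "inj_on (\<lambda>k. k*n+i) {..<m}" using assms by (auto simp: inj_on_def)
  ultimately show ?thesis by (simp add: sum.reindex)
qed

lemma kron_hadamard:
  assumes hm: "complex_hadamard m Hm" and hn: "complex_hadamard n Hn"
    and m0: "0 < m" and n0: "0 < n"
  shows "complex_hadamard (m*n) (kron n Hm Hn)"
  unfolding complex_hadamard_def
proof (intro conjI allI impI)
  fix i j assume i: "i < m*n" and j: "j < m*n"
  have "i div n < m" "j div n < m" using i j by (auto simp: less_mult_imp_div_less)
  moreover have "i mod n < n" "j mod n < n" using n0 by auto
  ultimately show "norm (kron n Hm Hn i j) = 1" using hm hn
    by (simp add: kron_def complex_hadamard_def norm_mult)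
next
  fix i k assume i: "i < m*n" and k: "k < m*n"
  have id: "i div n < m" "k div n < m" using i k by (auto simp: less_mult_imp_div_less)
  have im: "i mod n < n" "k mod n < n" using n0 by auto
  have "(\<Sum>j<m*n. kron n Hm Hn i j * cnj (kron n Hm Hn k j))
     = (\<Sum>a<m. \<Sum>b<n. (Hm (i div n) a * cnj (Hm (k div n) a)) * (Hn (i mod n) b * cnj (Hn (k mod n) b)))"
    unfolding sum_lessThan_mult using n0
    by (intro sum.cong refl) (simp add: kron_def algebra_simps)
  also have "\<dots> = (\<Sum>a<m. Hm (i div n) a * cnj (Hm (k div n) a)) * (\<Sum>b<n. Hn (i mod n) b * cnj (Hn (k mod n) b))"
    by (simp add: sum_product)
  also have "\<dots> = (if i div n = k div n then of_nat m else 0) * (if i mod n = k mod n then of_nat n else 0)"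
    using hm hn id im unfolding complex_hadamard_def by simp
  also have "\<dots> = (if i = k then of_nat (m*n) else 0)"
  proof -
    have "(i div n = k div n \<and> i mod n = k mod n) = (i = k)" by (metis div_mult_mod_eq)
    then show ?thesis by auto
  qed
  finally show "(\<Sum>j<m*n. kron n Hm Hn i j * cnj (kron n Hm Hn k j)) = (if i = k then of_nat (m*n) else 0)" .
qed

lemma block_zero:
  assumes hm: "complex_hadamard m Hm" and n0: "0 < n" and il: "i < n"
    and p: "p < m*n" and q: "q < m*n" and pq: "p div n \<noteq> q div n"
  shows "(\<Sum>c\<in>col_class m n i. kron n Hm Hn p c * cnj (kron n Hm Hn q c)) = 0"
proof -
  have id: "p div n < m" "q div n < m" using p q by (auto simp: less_mult_imp_div_less)
  have "(\<Sum>c\<in>col_class m n i. kron n Hm Hn p c * cnj (kron n Hm Hn q c))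
      = (\<Sum>k<m. (Hn (p mod n) i * cnj (Hn (q mod n) i)) * (Hm (p div n) k * cnj (Hm (q div n) k)))"
    unfolding sum_col_class[OF n0] using il
    by (intro sum.cong refl) (simp add: kron_def algebra_simps)
  also have "\<dots> = (Hn (p mod n) i * cnj (Hn (q mod n) i)) * (\<Sum>k<m. Hm (p div n) k * cnj (Hm (q div n) k))"
    by (simp add: sum_distrib_left)
  also have "\<dots> = 0" using hm id pq unfolding complex_hadamard_def by simp
  finally show ?thesis .
qed


lemma switch_sum:
  fixes X :: "nat \<Rightarrow> complex"
  assumes "finite A" "C \<subseteq> A" "sum X C = 0"
  shows "(\<Sum>c\<in>A. if c \<in> C then b * X c else X c) = sum X A"
proof -
  have "(\<Sum>c\<in>A. if c \<in> C then b * X c else X c) = (\<Sum>c\<in>C. b * X c) + sum X (A - C)"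
    using assms(1,2) by (simp add: sum.If_cases Int_absorb1 Diff_eq)
  also have "(\<Sum>c\<in>C. b * X c) = 0" using assms(3) by (simp add: sum_distrib_left[symmetric])
  also have "sum X A = sum X C + sum X (A - C)"
    using assms(1,2) by (metis add.commute sum.subset_diff)
  ultimately show ?thesis using assms(3) by simp
qed

lemma col_class_sub: "0 < n \<Longrightarrow> i < n \<Longrightarrow> col_class m n i \<subseteq> {..<m*n}"
proof
  fix c assume n: "0 < n" "i < n" and "c \<in> col_class m n i"
  then obtain k where k: "k < m" "c = k*n+i" by (auto simp: col_class_def)
  have "k*n + i < k*n + n" using n by simp
  also have "\<dots> = Suc k * n" by simp
  also have "\<dots> \<le> m*n" using k by (intro mult_right_mono) auto
  finally show "c \<in> {..<m*n}" using k by simp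
qed

theorem corollary6p5:
  fixes m n :: nat and Hm Hn :: "nat \<Rightarrow> nat \<Rightarrow> complex"
  assumes "0 < m" and "0 < n"
    and "complex_hadamard m Hm" and "complex_hadamard n Hn"
  defines "H \<equiv> kron n Hm Hn"
    and "R1 \<equiv> {..<n}" and "R \<equiv> {n..<m*n}"
  shows "((\<forall>i<n. col_class m n i \<noteq> {}) \<and>
         (\<forall>i<n. \<forall>j<n. i \<noteq> j \<longrightarrow> col_class m n i \<inter> col_class m n j = {}) \<and>
         (\<Union>i<n. col_class m n i) = {..<m*n}) \<and>
         (R \<inter> R1 = {} \<and> R \<union> R1 = {..<m*n}) \<and>
         (\<forall>i<n. \<forall>j<n. i \<noteq> j \<longrightarrow>
           (\<forall>c\<in>col_class m n i. \<forall>c'\<in>col_class m n j.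
              (\<Sum>r\<in>R1. H r c * cnj (H r c')) = 0)) \<and>
         (\<forall>i<n. \<forall>a::complex. norm a = 1 \<longrightarrow>
           complex_hadamard (m*n) (switch_block R1 (col_class m n i) a H))"
proof -
  have hH: "complex_hadamard (m*n) H" unfolding H_def by (rule kron_hadamard) (use assms in auto)
  have P1: "\<forall>i<n. col_class m n i \<noteq> {}"
  proof (intro allI impI)
    fix i assume "i < n"
    have "0*n+i \<in> col_class m n i" using assms(1) unfolding col_class_def by blast
    then show "col_class m n i \<noteq> {}" by blast
  qed
  have P2: "\<forall>i<n. \<forall>j<n. i \<noteq> j \<longrightarrow> col_class m n i \<inter> col_class m n j = {}"
  proof (intro allI impI)
    fix i j assume ij: "i < n" "j < n" "i \<noteq> j"
    show "col_class m n i \<inter> col_class m n j = {}"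
    proof (rule ccontr)
      assume "col_class m n i \<inter> col_class m n j \<noteq> {}"
      then obtain k k' where "k*n+i = k'*n+j" by (auto simp: col_class_def)
      then have "(k*n+i) mod n = (k'*n+j) mod n" by simp
      then show False using ij by simp
    qed
  qed
  have P3: "(\<Union>i<n. col_class m n i) = {..<m*n}"
  proof
    show "(\<Union>i<n. col_class m n i) \<subseteq> {..<m*n}" using col_class_sub[OF assms(2)] by blast
  next
    show "{..<m*n} \<subseteq> (\<Union>i<n. col_class m n i)"
    proof
      fix c assume c: "c \<in> {..<m*n}"
      have "c div n < m" using c by (auto simp: less_mult_imp_div_less)
      then have "(c div n)*n + c mod n \<in> col_class m n (c mod n)" unfolding col_class_def by blast
      moreover have "c mod n < n" using assms(2) by simp
      ultimately show "c \<in> (\<Union>i<n. col_class m n i)" by (metis UN_I div_mult_mod_eq lessThan_iff)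
    qed
  qed
  have P4: "R \<inter> R1 = {} \<and> R \<union> R1 = {..<m*n}"
  proof -
    have "n \<le> m*n" using assms(1) by simp
    then show ?thesis unfolding R_def R1_def by (auto simp del: mult_le_cancel2 mult_le_cancel_right2 intro: less_le_trans)
  qed
  have P5: "\<forall>i<n. \<forall>j<n. i \<noteq> j \<longrightarrow>
           (\<forall>c\<in>col_class m n i. \<forall>c'\<in>col_class m n j.
              (\<Sum>r\<in>R1. H r c * cnj (H r c')) = 0)"
  proof (intro allI impI ballI)
    fix i j c c' assume ij: "i < n" "j < n" "i \<noteq> j" and c: "c \<in> col_class m n i" and c': "c' \<in> col_class m n j"
    obtain k where k: "c = k*n+i" using c by (auto simp: col_class_def)
    obtain k' where k': "c' = k'*n+j" using c' by (auto simp: col_class_def)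
    have "(\<Sum>r\<in>R1. H r c * cnj (H r c')) = (\<Sum>r<n. (Hm 0 k * cnj (Hm 0 k')) * (Hn r i * cnj (Hn r j)))"
      unfolding R1_def H_def k k' using ij by (intro sum.cong refl) (simp add: kron_def algebra_simps)
    also have "\<dots> = (Hm 0 k * cnj (Hm 0 k')) * (\<Sum>r<n. Hn r i * cnj (Hn r j))"
      by (simp add: sum_distrib_left)
    also have "\<dots> = 0" using hadamard_cols[OF assms(4) ij(1,2)] ij by simp
    finally show "(\<Sum>r\<in>R1. H r c * cnj (H r c')) = 0" .
  qed
  have P6: "\<forall>i<n. \<forall>a::complex. norm a = 1 \<longrightarrow>
           complex_hadamard (m*n) (switch_block R1 (col_class m n i) a H)"
  proof (intro allI impI)
    fix i and a :: complex assume i: "i < n" and a: "norm a = 1"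
    have aa: "a * cnj a = 1" "cnj a * a = 1" using a complex_norm_square[of a] by (simp_all add: mult.commute)
    let ?C = "col_class m n i"
    let ?S = "switch_block R1 ?C a H"
    show "complex_hadamard (m*n) ?S"
      unfolding complex_hadamard_def
    proof (intro conjI allI impI)
      fix p q assume "p < m*n" "q < m*n"
      then show "norm (?S p q) = 1" using hH a
        by (simp add: switch_block_def complex_hadamard_def norm_mult)
    next
      fix p q assume p: "p < m*n" and q: "q < m*n"
      have full: "(\<Sum>c<m*n. H p c * cnj (H q c)) = (if p = q then of_nat (m*n) else 0)"
        using hH p q unfolding complex_hadamard_def by simp
      show "(\<Sum>c<m*n. ?S p c * cnj (?S q c)) = (if p = q then of_nat (m*n) else 0)"
      proof (cases "(p < n) = (q < n)")
        case True
        have "(\<Sum>c<m*n. ?S p c * cnj (?S q c)) = (\<Sum>c<m*n. H p c * cnj (H q c))"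
        proof (intro sum.cong refl)
          fix c
          show "?S p c * cnj (?S q c) = H p c * cnj (H q c)"
            using True aa unfolding switch_block_def R1_def
            by (cases "c \<in> ?C") (auto simp: algebra_simps)
        qed
        then show ?thesis using full by simp
      next
        case False
        then have pq: "p div n \<noteq> q div n" "p \<noteq> q"
          using assms(2) by (auto simp: div_eq_0_iff)
        have Z: "(\<Sum>c\<in>?C. H p c * cnj (H q c)) = 0"
          unfolding H_def by (rule block_zero[OF assms(3) assms(2) i p q pq(1)])
        obtain b where b: "\<And>c. ?S p c * cnj (?S q c) = (if c \<in> ?C then b * (H p c * cnj (H q c)) else H p c * cnj (H q c))"
        proof (cases "p < n")
          case True
          then have "q \<ge> n" using False by simp
          then show ?thesis using True
            by (intro that[of a]) (auto simp: switch_block_def R1_def)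
        next
          case F: False
          then have "q < n" using False by simp
          then show ?thesis using F
            by (intro that[of "cnj a"]) (auto simp: switch_block_def R1_def)
        qed
        have "(\<Sum>c<m*n. ?S p c * cnj (?S q c)) = (\<Sum>c<m*n. H p c * cnj (H q c))"
          unfolding b by (rule switch_sum[OF _ col_class_sub[OF assms(2) i] Z]) simp
        then show ?thesis using full by simp
      qed
    qed
  qed
  show ?thesis using P1 P2 P3 P4 P5 P6 by blast
qed

end
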